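(* Let $F:X\to X$ be an interaction with constants $\Lambda_{ij}$, and let $S\in st_0(\Gamma_F)$ with index set $\mathcal{I}_S$. Then: (1) For $x\in X$ let $x^0=x$, $x^{k+1}=F(x^k)$, and $C=\max\{|\beta|-2:\beta\in\mathcal{B}_S(\Gamma_F)\}$. Define $\tilde x^C\in X|_S\times B_S$ by $(\tilde x^C)_j=x^C_j$ for $j\in\mathcal{I}_S$ and $(\tilde x^C)_{\eta(\beta,\ell)}=x^{C-\ell}_{a_0(\beta)}$ for each new coordinate $\eta(\beta,\ell)$, where $a_0(\beta)$ is the index of the initial vertex of $\beta$; and let $\tilde x^{C+k}=(\mathcal{X}_SF)^k(\tilde x^C)$. Then $(\mathcal{X}_SF(\tilde x^{C+k}))_j=F(x^{C+k})_j$ for all $j\in\mathcal{I}_S$ and all $k\ge0$. (2) There exist constants $\tilde\Lambda_{pq}$ satisfying the Lipschitz condition for the interaction $\mathcal{X}_SF$ such that $\rho(\tilde\Lambda)\le\rho(\Lambda)$.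
   Context: Let $\mathcal{I}=\{1,\dots,n\}$, $(X_i,d)$ compact metric spaces, $X=\prod_iX_i$ with $d_{\max}(x,y)=\max_id(x_i,y_i)$. An interaction $F:X\to X$ is given by nonempty $\mathcal{I}_j\subseteq\mathcal{I}$ and continuous $F_j:\prod_{i\in\mathcal{I}_j}X_i\to X_j$ with $F(x)_j=F_j(\{x_i\}_{i\in\mathcal{I}_j})$, together with constants $\Lambda_{ij}\ge0$ ($\Lambda_{ij}=0$ if $i\notin\mathcal{I}_j$) satisfying the Lipschitz condition $d(F_j(\{x_i\}),F_j(\{y_i\}))\le\sum_{i\in\mathcal{I}_j}\Lambda_{ij}d(x_i,y_i)$; the same notion (with its own index sets and constants) applies to maps on any finite product of compact metric spaces. $\rho$ is spectral radius. The graph of interactions $\Gamma_F$ has vertices $v_1,\dots,v_n$ and an edge from $v_i$ to $v_j$ of weight $\Lambda_{ij}$ when $i\in\mathcal{I}_j$. $st_0(\Gamma_F)$ is the set of nonempty $S\subseteq\{v_1,\dots,v_n\}$ such that the subgraph of $\Gamma_F$ induced on the complement of $S$ contains no directed cycles and no loops; $\mathcal{I}_S=\{j:v_j\in S\}$. A branch is a path $u_1,\dots,u_m$ of distinct vertices, or a cycle ($u_1=u_m$, others distinct), with $u_1,u_m\in S$ and interior vertices $u_2,\dots,u_{m-1}$ not in $S$; $|\beta|=m$; $\mathcal{B}_S(\Gamma_F)$ is the set of branches. Expansion $\mathcal{X}_SF$: for each branch $\beta$ with $r=|\beta|-2\ge1$ introduce new coordinates $\eta(\beta,1),\dots,\eta(\beta,r)$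 (distinct new indices, different from $1,\dots,n$), each with state space $X_{a_0}$ where $v_{a_0}$ is the initial vertex of $\beta$; $B_S$ is the product of these spaces and $X|_S=\prod_{j\in\mathcal{I}_S}X_j$. For $j\in\mathcal{I}_S$, start from the expression $F_j(\{x_i\}_{i\in\mathcal{I}_j})$ and repeatedly replace each occurring variable $x_i$ with $i\notin\mathcal{I}_S$ by $F_i(\{x_k\}_{k\in\mathcal{I}_i})$; this terminates, and each remaining occurrence of a variable $x_{a_0}$ ($a_0\in\mathcal{I}_S$), nested as $F_j(\dots F_{a_r}(\dots F_{a_1}(\dots x_{a_0}\dots)))$, corresponds to the branch $\beta=v_{a_0},v_{a_1},\dots,v_{a_r},v_j$; replace that occurrence by $x_{\eta(\beta,r)}$ if $r\ge1$ (leave it if $r=0$). Call the resulting function $\tilde F_j$. Then $\mathcal{X}_SF:X|_S\times B_S\to X|_S\times B_S$ has components $(\mathcal{X}_SF)_j=\tilde F_j$ for $j\in\mathcal{I}_S$, $(\mathcal{X}_SF)_{\eta(\beta,1)}=x_{a_0}$, and $(\mathcal{X}_SF)_{\eta(\beta,\ell)}=x_{\eta(\beta,\ell-1)}$ for $2\le\ell\le|\beta|-2$; it is an interaction on $X|_S\times B_S$ with the max metric. *)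

theory Defs
  imports "HOL-Analysis.Analysis" "Jordan_Normal_Form.Spectral_Radius"
begin

text \<open>A finite product of metric spaces is modelled by a finite index set I (of
  some type 'i), and carriers Xs i, all subsets of one metric space type 'a.
  Points of the product are the extensional functions in PiE I Xs.
  Component j of the interaction is Fc j, a map defined on PiE (Dep j) Xs, i.e.
  on the product over the dependency index set Dep j (the paper's I_j).\<close>

definition lipschitz_consts ::
  "'i set \<Rightarrow> ('i \<Rightarrow> 'a::metric_space set) \<Rightarrow> ('i \<Rightarrow> 'i set)
   \<Rightarrow> ('i \<Rightarrow> ('i \<Rightarrow> 'a) \<Rightarrow> 'a) \<Rightarrow> ('i \<Rightarrow> 'i \<Rightarrow> real) \<Rightarrow> bool" where
  "lipschitz_consts I Xs Dep Fc Lam \<longleftrightarrow>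
     (\<forall>i\<in>I. \<forall>j\<in>I. 0 \<le> Lam i j \<and> (i \<notin> Dep j \<longrightarrow> Lam i j = 0)) \<and>
     (\<forall>j\<in>I. \<forall>x\<in>PiE (Dep j) Xs. \<forall>y\<in>PiE (Dep j) Xs.
        dist (Fc j x) (Fc j y) \<le> (\<Sum>i\<in>Dep j. Lam i j * dist (x i) (y i)))"

definition interaction ::
  "'i set \<Rightarrow> ('i \<Rightarrow> 'a::metric_space set) \<Rightarrow> ('i \<Rightarrow> 'i set)
   \<Rightarrow> ('i \<Rightarrow> ('i \<Rightarrow> 'a) \<Rightarrow> 'a) \<Rightarrow> ('i \<Rightarrow> 'i \<Rightarrow> real) \<Rightarrow> bool" where
  "interaction I Xs Dep Fc Lam \<longleftrightarrow>
     finite I \<and> (\<forall>i\<in>I. compact (Xs i)) \<and>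
     (\<forall>j\<in>I. Dep j \<noteq> {} \<and> Dep j \<subseteq> I) \<and>
     (\<forall>j\<in>I. \<forall>x\<in>PiE (Dep j) Xs. Fc j x \<in> Xs j) \<and>
     (\<forall>j\<in>I. continuous_on (PiE (Dep j) Xs) (Fc j)) \<and>
     lipschitz_consts I Xs Dep Fc Lam"

definition global_map ::
  "'i set \<Rightarrow> ('i \<Rightarrow> 'i set) \<Rightarrow> ('i \<Rightarrow> ('i \<Rightarrow> 'a) \<Rightarrow> 'a) \<Rightarrow> ('i \<Rightarrow> 'a) \<Rightarrow> ('i \<Rightarrow> 'a)" where
  "global_map I Dep Fc x = (\<lambda>j\<in>I. Fc j (restrict x (Dep j)))"

text \<open>Spectral radius of the matrix (Lam i j)_{i,j in J}, J finite, via an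
  (arbitrary) enumeration of J; the spectral radius does not depend on it.\<close>
definition spec_rad_on :: "'i set \<Rightarrow> ('i \<Rightarrow> 'i \<Rightarrow> real) \<Rightarrow> real" where
  "spec_rad_on J Lam =
     (let e = (SOME e. bij_betw e {..<card J} J)
      in spectral_radius (mat (card J) (card J) (\<lambda>(a, b). complex_of_real (Lam (e a) (e b)))))"

text \<open>Vertices v_1..v_n are identified with indices 1..n; there is an edge
  from v_i to v_j iff i \<in> Dep j.\<close>

definition st0 :: "nat \<Rightarrow> (nat \<Rightarrow> nat set) \<Rightarrow> nat set set" where
  "st0 n Dep = {S. S \<noteq> {} \<and> S \<subseteq> {1..n} \<and>
      acyclic {(i, j). i \<in> {1..n} - S \<and> j \<in> {1..n} - S \<and> i \<in> Dep j}}"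

definition is_branch :: "nat \<Rightarrow> (nat \<Rightarrow> nat set) \<Rightarrow> nat set \<Rightarrow> nat list \<Rightarrow> bool" where
  "is_branch n Dep S \<beta> \<longleftrightarrow>
     2 \<le> length \<beta> \<and> set \<beta> \<subseteq> {1..n} \<and>
     (\<forall>k. Suc k < length \<beta> \<longrightarrow> \<beta> ! k \<in> Dep (\<beta> ! Suc k)) \<and>
     hd \<beta> \<in> S \<and> last \<beta> \<in> S \<and>
     (\<forall>k. 0 < k \<and> Suc k < length \<beta> \<longrightarrow> \<beta> ! k \<notin> S) \<and>
     (distinct \<beta> \<or> (hd \<beta> = last \<beta> \<and> distinct (tl \<beta>)))"

definition branches :: "nat \<Rightarrow> (nat \<Rightarrow> nat set) \<Rightarrow> nat set \<Rightarrow> nat list set" where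
  "branches n Dep S = {\<beta>. is_branch n Dep S \<beta>}"

text \<open>Coordinates of X|_S \<times> B_S: Inl j for j \<in> I_S, and Inr (\<beta>, l) for the new
  coordinate \<eta>(\<beta>, l), 1 \<le> l \<le> |\<beta>| - 2.\<close>
type_synonym xidx = "nat + (nat list \<times> nat)"

definition exp_index :: "nat \<Rightarrow> (nat \<Rightarrow> nat set) \<Rightarrow> nat set \<Rightarrow> xidx set" where
  "exp_index n Dep S = Inl ` S \<union>
     {Inr (\<beta>, l) | \<beta> l. \<beta> \<in> branches n Dep S \<and> 1 \<le> l \<and> l \<le> length \<beta> - 2}"

definition exp_spaces :: "(nat \<Rightarrow> 'a set) \<Rightarrow> xidx \<Rightarrow> 'a set" where
  "exp_spaces X q = (case q of Inl j \<Rightarrow> X j | Inr (\<beta>, l) \<Rightarrow> X (hd \<beta>))"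

text \<open>The variable replacing the occurrence of x_{a_0} corresponding to branch
  \<beta> = a_0, a_1, .., a_r, j: x_{a_0} itself if r = 0, else x_{\<eta>(\<beta>, r)}.\<close>
definition leaf_idx :: "nat list \<Rightarrow> xidx" where
  "leaf_idx \<beta> = (if length \<beta> = 2 then Inl (hd \<beta>) else Inr (\<beta>, length \<beta> - 2))"

text \<open>The repeated substitution: xunfold f S Dep Fc z t is the value of the
  (sub)expression F_{hd t}(...) where t = a_1, .., a_r, j records the nesting
  (the vertices through which the substitution passed, ending at j).
  f is fuel; fuel n + 1 suffices since the graph outside S is acyclic.\<close>
primrec xunfold ::
  "nat \<Rightarrow> nat set \<Rightarrow> (nat \<Rightarrow> nat set) \<Rightarrow> (nat \<Rightarrow> (nat \<Rightarrow> 'a) \<Rightarrow> 'a)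
   \<Rightarrow> (xidx \<Rightarrow> 'a) \<Rightarrow> nat list \<Rightarrow> 'a" where
  "xunfold 0 S Dep Fc z t = undefined"
| "xunfold (Suc f) S Dep Fc z t =
     Fc (hd t) (\<lambda>k\<in>Dep (hd t). if k \<in> S then z (leaf_idx (k # t))
                               else xunfold f S Dep Fc z (k # t))"

definition exp_Ftilde ::
  "nat \<Rightarrow> nat set \<Rightarrow> (nat \<Rightarrow> nat set) \<Rightarrow> (nat \<Rightarrow> (nat \<Rightarrow> 'a) \<Rightarrow> 'a)
   \<Rightarrow> nat \<Rightarrow> (xidx \<Rightarrow> 'a) \<Rightarrow> 'a" where
  "exp_Ftilde n S Dep Fc j z = xunfold (Suc n) S Dep Fc z [j]"

definition exp_comp ::
  "nat \<Rightarrow> nat set \<Rightarrow> (nat \<Rightarrow> nat set) \<Rightarrow> (nat \<Rightarrow> (nat \<Rightarrow> 'a) \<Rightarrow> 'a)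
   \<Rightarrow> xidx \<Rightarrow> (xidx \<Rightarrow> 'a) \<Rightarrow> 'a" where
  "exp_comp n S Dep Fc q z = (case q of
      Inl j \<Rightarrow> exp_Ftilde n S Dep Fc j z
    | Inr (\<beta>, l) \<Rightarrow> (if l = 1 then z (Inl (hd \<beta>)) else z (Inr (\<beta>, l - 1))))"

definition exp_dep :: "nat \<Rightarrow> (nat \<Rightarrow> nat set) \<Rightarrow> nat set \<Rightarrow> xidx \<Rightarrow> xidx set" where
  "exp_dep n Dep S q = (case q of
      Inl j \<Rightarrow> {leaf_idx \<beta> | \<beta>. \<beta> \<in> branches n Dep S \<and> last \<beta> = j}
    | Inr (\<beta>, l) \<Rightarrow> (if l = 1 then {Inl (hd \<beta>)} else {Inr (\<beta>, l - 1)}))"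

definition exp_map ::
  "nat \<Rightarrow> nat set \<Rightarrow> (nat \<Rightarrow> nat set) \<Rightarrow> (nat \<Rightarrow> (nat \<Rightarrow> 'a) \<Rightarrow> 'a)
   \<Rightarrow> (xidx \<Rightarrow> 'a) \<Rightarrow> (xidx \<Rightarrow> 'a)" where
  "exp_map n S Dep Fc = global_map (exp_index n Dep S) (exp_dep n Dep S) (exp_comp n S Dep Fc)"

definition max_branch :: "nat \<Rightarrow> (nat \<Rightarrow> nat set) \<Rightarrow> nat set \<Rightarrow> nat" where
  "max_branch n Dep S = Max {length \<beta> - 2 | \<beta>. \<beta> \<in> branches n Dep S}"

definition exp_init ::
  "nat \<Rightarrow> nat set \<Rightarrow> (nat \<Rightarrow> nat set) \<Rightarrow> (nat \<Rightarrow> (nat \<Rightarrow> 'a) \<Rightarrow> 'a)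
   \<Rightarrow> (nat \<Rightarrow> 'a) \<Rightarrow> (xidx \<Rightarrow> 'a)" where
  "exp_init n S Dep Fc x =
     (let FF = global_map {1..n} Dep Fc; C = max_branch n Dep S
      in (\<lambda>q\<in>exp_index n Dep S. case q of
            Inl j \<Rightarrow> (FF ^^ C) x j
          | Inr (\<beta>, l) \<Rightarrow> (FF ^^ (C - l)) x (hd \<beta>)))"

end

theory Submission
  imports Defs
begin

lemma spectrum_transpose_eq:
  assumes "(A :: complex mat) \<in> carrier_mat N N"
  shows "spectrum (transpose_mat A) = spectrum A"
  using assms unfolding spectrum_def
  by (auto simp: eigenvalue_root_char_poly[OF assms] eigenvalue_root_char_poly[of "transpose_mat A" N])

lemma eig_to_fun:
  fixes M :: "'k \<Rightarrow> 'k \<Rightarrow> real"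
  assumes e: "bij_betw e {..<N} K"
    and ev: "ev \<in> spectrum (mat N N (\<lambda>(a, b). complex_of_real (M (e a) (e b))))"
  shows "\<exists>V. (\<exists>q\<in>K. V q \<noteq> 0) \<and>
      (\<forall>q\<in>K. (\<Sum>p\<in>K. complex_of_real (M p q) * V p) = ev * V q)"
proof -
  let ?A = "mat N N (\<lambda>(a, b). complex_of_real (M (e a) (e b)))"
  have A: "?A \<in> carrier_mat N N" by auto
  from ev have "ev \<in> spectrum (transpose_mat ?A)" using spectrum_transpose_eq[OF A] by simp
  then obtain v where v: "v \<in> carrier_vec N" "v \<noteq> 0\<^sub>v N" "transpose_mat ?A *\<^sub>v v = ev \<cdot>\<^sub>v v"
    unfolding spectrum_def eigenvalue_def eigenvector_def by auto
  define ie where "ie = the_inv_into {..<N} e"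
  have ie: "\<And>a. a < N \<Longrightarrow> ie (e a) = a" "\<And>q. q \<in> K \<Longrightarrow> e (ie q) = q" "\<And>q. q \<in> K \<Longrightarrow> ie q < N"
    using e unfolding ie_def bij_betw_def
    by (auto simp: the_inv_into_f_f f_the_inv_into_f the_inv_into_into)
  define V where "V p = v $ ie p" for p
  have eq: "(\<Sum>a<N. complex_of_real (M (e a) (e b)) * v $ a) = ev * v $ b" if b: "b < N" for b
  proof -
    have "(transpose_mat ?A *\<^sub>v v) $ b = ev * v $ b" using v b by simp
    moreover have "(transpose_mat ?A *\<^sub>v v) $ b = (\<Sum>a<N. complex_of_real (M (e a) (e b)) * v $ a)"
      using b v(1) by (auto simp: scalar_prod_def col_def lessThan_atLeast0 intro!: sum.cong)
    ultimately show ?thesis by simp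
  qed
  have "\<exists>q\<in>K. V q \<noteq> 0"
  proof (rule ccontr)
    assume "\<not> ?thesis"
    hence "v $ a = 0" if "a < N" for a using that e ie unfolding V_def bij_betw_def by (metis image_eqI lessThan_iff)
    hence "v = 0\<^sub>v N" using v by (intro eq_vecI) auto
    with v show False by simp
  qed
  moreover have "(\<Sum>p\<in>K. complex_of_real (M p q) * V p) = ev * V q" if q: "q \<in> K" for q
  proof -
    have "(\<Sum>p\<in>K. complex_of_real (M p q) * V p) = (\<Sum>a<N. complex_of_real (M (e a) q) * V (e a))"
      by (rule sum.reindex_bij_betw[OF e, symmetric])
    also have "\<dots> = (\<Sum>a<N. complex_of_real (M (e a) (e (ie q))) * v $ a)"
      using ie q unfolding V_def by simp
    also have "\<dots> = ev * v $ ie q" using eq[OF ie(3)[OF q]] ie(2)[OF q] by simp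
    finally show ?thesis unfolding V_def .
  qed
  ultimately show ?thesis by blast
qed

lemma fun_to_eig:
  fixes M :: "'k \<Rightarrow> 'k \<Rightarrow> real"
  assumes e: "bij_betw e {..<N} K"
    and u: "\<exists>q\<in>K. u q \<noteq> 0" "\<forall>q\<in>K. (\<Sum>p\<in>K. complex_of_real (M p q) * u p) = ev * u q"
  shows "ev \<in> spectrum (mat N N (\<lambda>(a, b). complex_of_real (M (e a) (e b))))"
proof -
  let ?A = "mat N N (\<lambda>(a, b). complex_of_real (M (e a) (e b)))"
  have A: "?A \<in> carrier_mat N N" by auto
  define v where "v = vec N (\<lambda>a. u (e a))"
  have "v \<noteq> 0\<^sub>v N"
  proof
    assume "v = 0\<^sub>v N"
    hence "u (e a) = 0" if "a < N" for a using that unfolding v_def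
      by (metis index_vec index_zero_vec(1))
    with u(1) e show False unfolding bij_betw_def by auto
  qed
  moreover have "transpose_mat ?A *\<^sub>v v = ev \<cdot>\<^sub>v v"
  proof (rule eq_vecI)
    fix b assume "b < dim_vec (ev \<cdot>\<^sub>v v)"
    hence b: "b < N" unfolding v_def by simp
    have "(transpose_mat ?A *\<^sub>v v) $ b = (\<Sum>a<N. complex_of_real (M (e a) (e b)) * u (e a))"
      using b by (auto simp: scalar_prod_def col_def lessThan_atLeast0 v_def intro!: sum.cong)
    also have "\<dots> = (\<Sum>p\<in>K. complex_of_real (M p (e b)) * u p)"
      by (rule sum.reindex_bij_betw[OF e])
    also have "\<dots> = ev * u (e b)" using u(2) e b unfolding bij_betw_def by auto
    finally show "(transpose_mat ?A *\<^sub>v v) $ b = (ev \<cdot>\<^sub>v v) $ b" using b by (simp add: v_def)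
  qed (simp add: v_def)
  ultimately have "ev \<in> spectrum (transpose_mat ?A)"
    unfolding spectrum_def eigenvalue_def eigenvector_def
    by (intro CollectI exI[of _ v]) (auto simp: v_def)
  thus ?thesis using spectrum_transpose_eq[OF A] by simp
qed

lemma spec_rad_on_props:
  assumes "finite K" "K \<noteq> {}"
  obtains e where "bij_betw e {..<card K} K"
    "spec_rad_on K M = spectral_radius (mat (card K) (card K) (\<lambda>(a, b). complex_of_real (M (e a) (e b))))"
proof -
  have ex: "\<exists>e. bij_betw e {..<card K} K"
    using ex_bij_betw_nat_finite[OF assms(1)] by (simp add: lessThan_atLeast0)
  let ?e = "SOME e. bij_betw e {..<card K} K"
  have "bij_betw ?e {..<card K} K" using someI_ex[OF ex] .
  thus ?thesis using that unfolding spec_rad_on_def Let_def by blast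
qed

lemma sr_transfer:
  fixes M1 :: "'k \<Rightarrow> 'k \<Rightarrow> real" and M2 :: "'j \<Rightarrow> 'j \<Rightarrow> real"
  assumes K: "finite K" "K \<noteq> {}" and J: "finite J" "J \<noteq> {}"
  and H: "\<And>ev V. ev \<noteq> 0 \<Longrightarrow> (\<exists>q\<in>K. V q \<noteq> 0) \<Longrightarrow>
     (\<forall>q\<in>K. (\<Sum>p\<in>K. complex_of_real (M1 p q) * V p) = ev * V q) \<Longrightarrow>
     \<exists>u. (\<exists>i\<in>J. u i \<noteq> 0) \<and> (\<forall>i\<in>J. (\<Sum>k\<in>J. complex_of_real (M2 k i) * u k) = ev * u i)"
  shows "spec_rad_on K M1 \<le> spec_rad_on J M2"
proof -
  obtain e where e: "bij_betw e {..<card K} K"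
    and s1: "spec_rad_on K M1 = spectral_radius (mat (card K) (card K) (\<lambda>(a, b). complex_of_real (M1 (e a) (e b))))"
    using spec_rad_on_props[OF K] by blast
  obtain f where f: "bij_betw f {..<card J} J"
    and s2: "spec_rad_on J M2 = spectral_radius (mat (card J) (card J) (\<lambda>(a, b). complex_of_real (M2 (f a) (f b))))"
    using spec_rad_on_props[OF J] by blast
  let ?A = "mat (card K) (card K) (\<lambda>(a, b). complex_of_real (M1 (e a) (e b)))"
  let ?B = "mat (card J) (card J) (\<lambda>(a, b). complex_of_real (M2 (f a) (f b)))"
  have cK: "card K > 0" and cJ: "card J > 0" using K J by auto
  have A: "?A \<in> carrier_mat (card K) (card K)" and B: "?B \<in> carrier_mat (card J) (card J)" by auto
  obtain ev where ev: "ev \<in> spectrum ?A" "spectral_radius ?A = norm ev"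
    using spectral_radius_mem_max(1)[OF A cK] by auto
  obtain ev2 where ev2: "ev2 \<in> spectrum ?B" "spectral_radius ?B = norm ev2"
    using spectral_radius_mem_max(1)[OF B cJ] by auto
  show ?thesis
  proof (cases "ev = 0")
    case True
    thus ?thesis using s1 s2 ev ev2 by simp
  next
    case False
    obtain V where V: "\<exists>q\<in>K. V q \<noteq> 0" "\<forall>q\<in>K. (\<Sum>p\<in>K. complex_of_real (M1 p q) * V p) = ev * V q"
      using eig_to_fun[OF e ev(1)] by blast
    obtain u where u: "\<exists>i\<in>J. u i \<noteq> 0" "\<forall>i\<in>J. (\<Sum>k\<in>J. complex_of_real (M2 k i) * u k) = ev * u i"
      using H[OF False V] by blast
    have "ev \<in> spectrum ?B" using fun_to_eig[OF f u] .
    hence "norm ev \<le> spectral_radius ?B"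
      using spectral_radius_mem_max(2)[OF B cJ] by auto
    thus ?thesis using s1 s2 ev by simp
  qed
qed

definition chain :: "nat \<Rightarrow> (nat \<Rightarrow> nat set) \<Rightarrow> nat set \<Rightarrow> nat list \<Rightarrow> bool" where
  "chain n Dep S t \<longleftrightarrow> t \<noteq> [] \<and> set t \<subseteq> {1..n} \<and>
     (\<forall>i. Suc i < length t \<longrightarrow> t ! i \<in> Dep (t ! Suc i)) \<and>
     (\<forall>i. Suc i < length t \<longrightarrow> t ! i \<notin> S)"

definition Br :: "nat \<Rightarrow> (nat \<Rightarrow> nat set) \<Rightarrow> nat set \<Rightarrow> nat list \<Rightarrow> nat list set" where
  "Br n Dep S t = {\<beta> \<in> branches n Dep S. \<exists>s. s \<noteq> [] \<and> \<beta> = s @ t}"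

definition Wt :: "(nat \<Rightarrow> nat \<Rightarrow> real) \<Rightarrow> nat list \<Rightarrow> nat \<Rightarrow> real" where
  "Wt Lam \<beta> m = (\<Prod>i<m. Lam (\<beta> ! i) (\<beta> ! Suc i))"

declare xunfold.simps[simp del]

lemma gm_apply: "i \<in> I \<Longrightarrow> global_map I Dep Fc y i = Fc i (restrict y (Dep i))"
  by (simp add: global_map_def)

definition wgt :: "(nat \<Rightarrow> nat \<Rightarrow> real) \<Rightarrow> nat list \<Rightarrow> real" where
  "wgt Lam \<beta> = Wt Lam \<beta> (length \<beta> - 1)"

definition Lt :: "nat \<Rightarrow> (nat \<Rightarrow> nat set) \<Rightarrow> nat set \<Rightarrow> (nat \<Rightarrow> nat \<Rightarrow> real) \<Rightarrow> xidx \<Rightarrow> xidx \<Rightarrow> real" where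
  "Lt n Dep S Lam p q = (case q of
      Inl j \<Rightarrow> (\<Sum>\<beta>\<in>{\<beta> \<in> branches n Dep S. last \<beta> = j \<and> leaf_idx \<beta> = p}. wgt Lam \<beta>)
    | Inr _ \<Rightarrow> (if p \<in> exp_dep n Dep S q then 1 else 0))"

lemma len2_eq: "length xs = 2 \<Longrightarrow> xs = [hd xs, last xs]"
  by (cases xs; cases "tl xs") auto

lemma leaf_inj: assumes "2 \<le> length \<beta>" "2 \<le> length \<beta>'" "last \<beta> = last \<beta>'" "leaf_idx \<beta> = leaf_idx \<beta>'"
  shows "\<beta> = \<beta>'"
proof (cases "length \<beta> = 2")
  case True
  hence "length \<beta>' = 2" using assms unfolding leaf_idx_def by (auto split: if_splits)
  thus ?thesis using True assms len2_eq[of \<beta>] len2_eq[of \<beta>'] unfolding leaf_idx_def by auto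
next
  case False
  thus ?thesis using assms unfolding leaf_idx_def by (auto split: if_splits)
qed

lemma Wt_step: assumes "\<beta> = s @ k # t" "t \<noteq> []"
  shows "Wt Lam \<beta> (Suc (length s)) = Wt Lam \<beta> (length s) * Lam k (hd t)"
proof -
  have "\<beta> ! length s = k" "\<beta> ! Suc (length s) = hd t" using assms by (auto simp: nth_append hd_conv_nth)
  thus ?thesis unfolding Wt_def by simp
qed

lemma Wt_one: "t \<noteq> [] \<Longrightarrow> Wt Lam (k # t) (Suc 0) = Lam k (hd t)"
  unfolding Wt_def by (simp add: hd_conv_nth)

primrec gv :: "(nat \<Rightarrow> nat set) \<Rightarrow> nat set \<Rightarrow> (nat \<Rightarrow> nat \<Rightarrow> real) \<Rightarrow> (nat \<Rightarrow> complex) \<Rightarrow> complex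
   \<Rightarrow> nat \<Rightarrow> nat \<Rightarrow> complex" where
  "gv Dep S Lam U c 0 i = 0"
| "gv Dep S Lam U c (Suc f) i = c * (\<Sum>k\<in>Dep i. complex_of_real (Lam k i) * (if k \<in> S then U k else gv Dep S Lam U c f k))"

declare gv.simps[simp del]

locale xsetup =
  fixes n :: nat and X :: "nat \<Rightarrow> 'a::metric_space set" and Dep :: "nat \<Rightarrow> nat set"
    and Fc :: "nat \<Rightarrow> (nat \<Rightarrow> 'a) \<Rightarrow> 'a" and Lam :: "nat \<Rightarrow> nat \<Rightarrow> real" and S :: "nat set"
  assumes inter: "interaction {1..n} X Dep Fc Lam" and st: "S \<in> st0 n Dep"
begin

abbreviation "R \<equiv> {(i, j). i \<in> {1..n} - S \<and> j \<in> {1..n} - S \<and> i \<in> Dep j}"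

lemma S_ne: "S \<noteq> {}" and S_sub: "S \<subseteq> {1..n}" and acyc: "acyclic R"
  using st unfolding st0_def by auto

lemma Dep_ne: "j \<in> {1..n} \<Longrightarrow> Dep j \<noteq> {}" and Dep_sub: "j \<in> {1..n} \<Longrightarrow> Dep j \<subseteq> {1..n}"
  using inter unfolding interaction_def by auto

lemma Fc_in: "j \<in> {1..n} \<Longrightarrow> x \<in> PiE (Dep j) X \<Longrightarrow> Fc j x \<in> X j"
  using inter unfolding interaction_def by auto

lemma Lam_nonneg: "i \<in> {1..n} \<Longrightarrow> j \<in> {1..n} \<Longrightarrow> 0 \<le> Lam i j"
  and Lam_zero: "i \<in> {1..n} \<Longrightarrow> j \<in> {1..n} \<Longrightarrow> i \<notin> Dep j \<Longrightarrow> Lam i j = 0"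
  using inter unfolding interaction_def lipschitz_consts_def by auto

lemma Fc_lip: "j \<in> {1..n} \<Longrightarrow> x \<in> PiE (Dep j) X \<Longrightarrow> y \<in> PiE (Dep j) X \<Longrightarrow>
    dist (Fc j x) (Fc j y) \<le> (\<Sum>i\<in>Dep j. Lam i j * dist (x i) (y i))"
  using inter unfolding interaction_def lipschitz_consts_def by auto

lemma n_pos: "0 < n" using S_ne S_sub by (cases n) auto

lemma chain_trancl:
  assumes c: "chain n Dep S t" and b: "b < length t" "t ! b \<notin> S"
  shows "a < b \<Longrightarrow> (t ! a, t ! b) \<in> R\<^sup>+"
  using b
proof (induction b)
  case 0 thus ?case by simp
next
  case (Suc b)
  have nb: "t ! b \<notin> S" using c Suc.prems unfolding chain_def by auto
  have bl: "b < length t" "Suc b < length t" using Suc.prems by auto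
  have inb: "t ! b \<in> {1..n}" "t ! Suc b \<in> {1..n}" using c bl unfolding chain_def
    by (meson nth_mem subsetD)+
  have edge: "(t ! b, t ! Suc b) \<in> R" using c Suc.prems nb inb unfolding chain_def by auto
  show ?case
  proof (cases "a = b")
    case True thus ?thesis using edge by auto
  next
    case False
    hence "(t ! a, t ! b) \<in> R\<^sup>+" using Suc nb by auto
    thus ?thesis using edge by (rule trancl_into_trancl)
  qed
qed

lemma chain_distinct:
  assumes c: "chain n Dep S t" shows "distinct t"
proof -
  have "t ! a \<noteq> t ! b" if ab: "a < b" "b < length t" for a b
  proof (cases "t ! b \<in> S")
    case True
    hence "b = length t - 1 \<or> Suc b < length t" using ab by auto
    moreover have "t ! a \<notin> S" using c ab unfolding chain_def by auto
    ultimately show ?thesis using True by auto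
  next
    case False
    have "(t ! a, t ! b) \<in> R\<^sup>+" using chain_trancl[OF c ab(2) False ab(1)] .
    thus ?thesis using acyc unfolding acyclic_def by auto
  qed
  thus ?thesis unfolding distinct_conv_nth by (metis linorder_neqE_nat)
qed

lemma chain_len: "chain n Dep S t \<Longrightarrow> length t \<le> n"
  using chain_distinct[of t] distinct_card[of t] card_mono[of "{1..n}" "set t"]
  unfolding chain_def by auto

lemma chain_hd: "chain n Dep S t \<Longrightarrow> hd t \<in> {1..n}"
  unfolding chain_def by (cases t) auto

lemma chain_cons: "chain n Dep S t \<Longrightarrow> k \<in> Dep (hd t) \<Longrightarrow> k \<notin> S \<Longrightarrow> chain n Dep S (k # t)"
  using chain_hd[of t] Dep_sub[of "hd t"] unfolding chain_def
  by (auto simp: nth_Cons hd_conv_nth split: nat.splits)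

lemma chain_single: "i \<in> {1..n} \<Longrightarrow> chain n Dep S [i]"
  unfolding chain_def by auto

lemma chain_branch:
  assumes c: "chain n Dep S t" and l: "last t \<in> S" and k: "k \<in> Dep (hd t)" "k \<in> S"
  shows "k # t \<in> branches n Dep S"
proof -
  have d: "distinct t" using chain_distinct[OF c] .
  have tne: "t \<noteq> []" using c unfolding chain_def by auto
  have kin: "k \<in> {1..n}" using k Dep_sub[OF chain_hd[OF c]] by auto
  have "k \<notin> set t \<or> k = last t"
  proof (rule ccontr)
    assume "\<not> ?thesis"
    then obtain i where i: "i < length t" "t ! i = k" "k \<noteq> last t" by (auto simp: in_set_conv_nth)
    hence "Suc i < length t" using tne by (metis Suc_lessI diff_Suc_1 last_conv_nth)
    thus False using c i k unfolding chain_def by auto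
  qed
  hence dd: "distinct (k # t) \<or> (hd (k # t) = last (k # t) \<and> distinct (tl (k # t)))"
    using d tne by auto
  show ?thesis unfolding branches_def is_branch_def
    using c l k kin tne dd unfolding chain_def
    by (auto simp: nth_Cons hd_conv_nth Suc_le_eq split: nat.splits)
qed

lemma branch_props:
  assumes "\<beta> \<in> branches n Dep S"
  shows "2 \<le> length \<beta>" "set \<beta> \<subseteq> {1..n}" "hd \<beta> \<in> S" "last \<beta> \<in> S"
    "\<And>k. Suc k < length \<beta> \<Longrightarrow> \<beta> ! k \<in> Dep (\<beta> ! Suc k)"
    "\<And>k. 0 < k \<Longrightarrow> Suc k < length \<beta> \<Longrightarrow> \<beta> ! k \<notin> S"
    "distinct \<beta> \<or> (hd \<beta> = last \<beta> \<and> distinct (tl \<beta>))"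
  using assms unfolding branches_def is_branch_def by auto

lemma branch_len: assumes "\<beta> \<in> branches n Dep S" shows "length \<beta> \<le> Suc n"
proof -
  have s: "set \<beta> \<subseteq> {1..n}" using branch_props[OF assms] by auto
  have "length (tl \<beta>) \<le> n"
  proof (cases "distinct \<beta>")
    case True
    hence "length \<beta> \<le> n" using distinct_card[OF True] card_mono[OF _ s] by auto
    thus ?thesis by simp
  next
    case False
    hence d: "distinct (tl \<beta>)" using branch_props(7)[OF assms] by auto
    have "set (tl \<beta>) \<subseteq> {1..n}" using s by (cases \<beta>) auto
    thus ?thesis using distinct_card[OF d] card_mono[of "{1..n}" "set (tl \<beta>)"] by auto
  qed
  thus ?thesis by simp
qed

lemma branches_finite: "finite (branches n Dep S)"
proof -
  have "branches n Dep S \<subseteq> {xs. set xs \<subseteq> {1..n} \<and> length xs \<le> Suc n}"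
    using branch_props(2) branch_len by blast
  thus ?thesis using finite_lists_length_le[of "{1..n}" "Suc n"] finite_subset by blast
qed

lemma Br_finite: "finite (Br n Dep S t)"
  using branches_finite unfolding Br_def by auto

lemma Br_len: "\<beta> \<in> Br n Dep S t \<Longrightarrow> length \<beta> > length t"
  unfolding Br_def by auto

lemma Br_decomp:
  assumes c: "chain n Dep S t" and l: "last t \<in> S"
  shows "Br n Dep S t = (\<lambda>k. k # t) ` (Dep (hd t) \<inter> S) \<union> (\<Union>k\<in>Dep (hd t) - S. Br n Dep S (k # t))"
proof
  have tne: "t \<noteq> []" using c unfolding chain_def by auto
  show "Br n Dep S t \<subseteq> (\<lambda>k. k # t) ` (Dep (hd t) \<inter> S) \<union> (\<Union>k\<in>Dep (hd t) - S. Br n Dep S (k # t))"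
  proof
    fix \<beta> assume b: "\<beta> \<in> Br n Dep S t"
    then obtain s where s: "s \<noteq> []" "\<beta> = s @ t" and bb: "\<beta> \<in> branches n Dep S" unfolding Br_def by auto
    obtain s' k where sk: "s = s' @ [k]" using s(1) by (metis rev_exhaust)
    have bk: "\<beta> = s' @ k # t" using s sk by simp
    have i1: "\<beta> ! length s' = k" using bk by simp
    have i2: "\<beta> ! Suc (length s') = hd t" using bk tne by (simp add: nth_append hd_conv_nth)
    have len: "Suc (length s') < length \<beta>" using bk tne by simp
    have kd: "k \<in> Dep (hd t)" using branch_props(5)[OF bb len] i1 i2 by simp
    show "\<beta> \<in> (\<lambda>k. k # t) ` (Dep (hd t) \<inter> S) \<union> (\<Union>k\<in>Dep (hd t) - S. Br n Dep S (k # t))"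
    proof (cases "k \<in> S")
      case True
      have "s' = []"
      proof (rule ccontr)
        assume "s' \<noteq> []"
        hence "0 < length s'" by simp
        from branch_props(6)[OF bb this len] i1 True show False by simp
      qed
      thus ?thesis using bk kd True by auto
    next
      case False
      have "s' \<noteq> []"
      proof
        assume "s' = []"
        hence "hd \<beta> = k" using bk by simp
        thus False using branch_props(3)[OF bb] False by simp
      qed
      hence "\<beta> \<in> Br n Dep S (k # t)" unfolding Br_def using bb bk by auto
      thus ?thesis using kd False by auto
    qed
  qed
  show "(\<lambda>k. k # t) ` (Dep (hd t) \<inter> S) \<union> (\<Union>k\<in>Dep (hd t) - S. Br n Dep S (k # t)) \<subseteq> Br n Dep S t"
  proof -
    have "k # t \<in> Br n Dep S t" if "k \<in> Dep (hd t)" "k \<in> S" for k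
      using chain_branch[OF c l that] unfolding Br_def by (auto intro!: exI[of _ "[k]"])
    moreover have "Br n Dep S (k # t) \<subseteq> Br n Dep S t" for k
      unfolding Br_def by (auto intro: exI[of _ "_ @ [k]"])
    ultimately show ?thesis by blast
  qed
qed

lemma Br_sum:
  fixes g :: "nat list \<Rightarrow> 'b::comm_monoid_add"
  assumes c: "chain n Dep S t" and l: "last t \<in> S"
  shows "(\<Sum>\<beta>\<in>Br n Dep S t. g \<beta>) =
    (\<Sum>k\<in>Dep (hd t) \<inter> S. g (k # t)) + (\<Sum>k\<in>Dep (hd t) - S. \<Sum>\<beta>\<in>Br n Dep S (k # t). g \<beta>)"
proof -
  have fD: "finite (Dep (hd t))" using Dep_sub[OF chain_hd[OF c]] finite_subset by blast
  have disj1: "(\<lambda>k. k # t) ` (Dep (hd t) \<inter> S) \<inter> (\<Union>k\<in>Dep (hd t) - S. Br n Dep S (k # t)) = {}"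
    using Br_len by fastforce
  have disj2: "Br n Dep S (k # t) \<inter> Br n Dep S (k' # t) = {}" if "k \<noteq> k'" for k k'
    using that unfolding Br_def by auto
  have "(\<Sum>\<beta>\<in>Br n Dep S t. g \<beta>) = (\<Sum>\<beta>\<in>(\<lambda>k. k # t) ` (Dep (hd t) \<inter> S). g \<beta>) +
      (\<Sum>\<beta>\<in>(\<Union>k\<in>Dep (hd t) - S. Br n Dep S (k # t)). g \<beta>)"
    unfolding Br_decomp[OF c l] using fD disj1 Br_finite
    by (intro sum.union_disjoint) auto
  also have "(\<Sum>\<beta>\<in>(\<lambda>k. k # t) ` (Dep (hd t) \<inter> S). g \<beta>) = (\<Sum>k\<in>Dep (hd t) \<inter> S. g (k # t))"
    by (subst sum.reindex) (auto simp: inj_on_def)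
  also have "(\<Sum>\<beta>\<in>(\<Union>k\<in>Dep (hd t) - S. Br n Dep S (k # t)). g \<beta>) =
      (\<Sum>k\<in>Dep (hd t) - S. \<Sum>\<beta>\<in>Br n Dep S (k # t). g \<beta>)"
    using fD disj2 Br_finite by (intro sum.UNION_disjoint) auto
  finally show ?thesis .
qed

abbreviation "FF \<equiv> global_map {1..n} Dep Fc"

lemma FF_step: "i \<in> {1..n} \<Longrightarrow> (FF ^^ Suc m) x i = Fc i (restrict ((FF ^^ m) x) (Dep i))"
proof -
  assume i: "i \<in> {1..n}"
  have "(FF ^^ Suc m) x = FF ((FF ^^ m) x)" by (simp only: funpow.simps o_def)
  thus ?thesis using gm_apply[OF i] by simp
qed

lemma xunfold_eval:
  assumes Cb: "\<forall>\<beta>\<in>branches n Dep S. length \<beta> - 2 \<le> C"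
    and j: "j \<in> S"
    and zl: "\<forall>\<beta>\<in>branches n Dep S. last \<beta> = j \<longrightarrow>
        z (leaf_idx \<beta>) = (FF ^^ (C + kk - (length \<beta> - 2))) x (hd \<beta>)"
  shows "chain n Dep S t \<Longrightarrow> last t = j \<Longrightarrow> length t + f = n + 2 \<Longrightarrow>
     length t - 1 \<le> C \<and> xunfold f S Dep Fc z t = (FF ^^ (C + kk + 2 - length t)) x (hd t)"
proof (induction f arbitrary: t)
  case 0
  thus ?case using chain_len[OF 0(1)] 0(3) by simp
next
  case (Suc f)
  let ?h = "hd t"
  have c: "chain n Dep S t" and lt: "last t = j" using Suc.prems by auto
  have tne: "t \<noteq> []" using c unfolding chain_def by auto
  have hin: "?h \<in> {1..n}" using chain_hd[OF c] .
  have key: "length t - 1 \<le> C \<and> (if k \<in> S then z (leaf_idx (k # t)) else xunfold f S Dep Fc z (k # t))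
       = (FF ^^ (C + kk + 1 - length t)) x k" if k: "k \<in> Dep ?h" for k
  proof (cases "k \<in> S")
    case True
    have b: "k # t \<in> branches n Dep S" using chain_branch[OF c _ k True] lt j by simp
    have l1: "length t - 1 \<le> C" using bspec[OF Cb b] by simp
    have "z (leaf_idx (k # t)) = (FF ^^ (C + kk - (length (k # t) - 2))) x k"
      using bspec[OF zl b] lt tne by simp
    moreover have "C + kk - (length (k # t) - 2) = C + kk + 1 - length t" using tne l1
      by (cases "length t") auto
    ultimately show ?thesis using True l1 by simp
  next
    case False
    have "chain n Dep S (k # t)" using chain_cons[OF c k False] .
    moreover have "last (k # t) = j" using lt tne by simp
    moreover have "length (k # t) + f = n + 2" using Suc.prems by simp
    ultimately have "length (k # t) - 1 \<le> C \<and> xunfold f S Dep Fc z (k # t) = (FF ^^ (C + kk + 2 - length (k # t))) x k"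
      using Suc.IH[of "k # t"] by (simp only: list.sel(1))
    moreover have "C + kk + 2 - length (k # t) = C + kk + 1 - length t" by simp
    ultimately show ?thesis using False by auto
  qed
  obtain k0 where k0: "k0 \<in> Dep ?h" using Dep_ne[OF hin] by auto
  have l1: "length t - 1 \<le> C" using key[OF k0] by (rule conjunct1)
  have e: "C + kk + 2 - length t = Suc (C + kk + 1 - length t)" using l1 tne by (cases "length t") auto
  have "xunfold (Suc f) S Dep Fc z t = Fc ?h (restrict ((FF ^^ (C + kk + 1 - length t)) x) (Dep ?h))"
  proof -
    have "(\<lambda>k\<in>Dep ?h. if k \<in> S then z (leaf_idx (k # t)) else xunfold f S Dep Fc z (k # t))
        = restrict ((FF ^^ (C + kk + 1 - length t)) x) (Dep ?h)"
    proof (intro restrict_ext)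
      fix k assume "k \<in> Dep ?h"
      from key[OF this] show "(if k \<in> S then z (leaf_idx (k # t)) else xunfold f S Dep Fc z (k # t)) =
        (FF ^^ (C + kk + 1 - length t)) x k" by (rule conjunct2)
    qed
    thus ?thesis by (simp add: xunfold.simps)
  qed
  also have "\<dots> = (FF ^^ (C + kk + 2 - length t)) x ?h" unfolding e using FF_step[OF hin] by simp
  finally show ?case using l1 by simp
qed

abbreviation "CC \<equiv> max_branch n Dep S"

lemma Cb: "\<forall>\<beta>\<in>branches n Dep S. length \<beta> - 2 \<le> CC"
proof
  fix \<beta> assume b: "\<beta> \<in> branches n Dep S"
  have "finite ((\<lambda>\<beta>. length \<beta> - 2) ` branches n Dep S)" using branches_finite by simp
  moreover have "{length \<beta> - 2 | \<beta>. \<beta> \<in> branches n Dep S} = (\<lambda>\<beta>. length \<beta> - 2) ` branches n Dep S" by auto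
  ultimately show "length \<beta> - 2 \<le> CC" unfolding max_branch_def using b by (simp add: Max_ge)
qed

lemma exp_index_Inl: "Inl j \<in> exp_index n Dep S \<longleftrightarrow> j \<in> S"
  unfolding exp_index_def by auto

lemma exp_index_Inr: "Inr (\<beta>, l) \<in> exp_index n Dep S \<longleftrightarrow> \<beta> \<in> branches n Dep S \<and> 1 \<le> l \<and> l \<le> length \<beta> - 2"
  unfolding exp_index_def by auto

lemma leaf_in_dep: "\<beta> \<in> branches n Dep S \<Longrightarrow> leaf_idx \<beta> \<in> exp_dep n Dep S (Inl (last \<beta>))"
  unfolding exp_dep_def by auto

lemma leaf_in_index: assumes "\<beta> \<in> branches n Dep S" shows "leaf_idx \<beta> \<in> exp_index n Dep S"
  using branch_props[OF assms] assms unfolding leaf_idx_def exp_index_def by auto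

lemma E_apply: "q \<in> exp_index n Dep S \<Longrightarrow>
   exp_map n S Dep Fc y q = exp_comp n S Dep Fc q (restrict y (exp_dep n Dep S q))"
  unfolding exp_map_def by (rule gm_apply)

lemma part1_step:
  assumes j: "j \<in> S"
    and Q: "\<forall>\<beta>\<in>branches n Dep S. last \<beta> = j \<longrightarrow>
        y (leaf_idx \<beta>) = (FF ^^ (CC + kk - (length \<beta> - 2))) x (hd \<beta>)"
  shows "exp_map n S Dep Fc y (Inl j) = (FF ^^ Suc (CC + kk)) x j"
proof -
  let ?D = "exp_dep n Dep S (Inl j)"
  have A: "exp_map n S Dep Fc y (Inl j) = xunfold (Suc n) S Dep Fc (restrict y ?D) [j]"
    using E_apply[of "Inl j" y] j by (simp add: exp_index_Inl exp_comp_def exp_Ftilde_def del: xunfold.simps)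
  have zl: "\<forall>\<beta>\<in>branches n Dep S. last \<beta> = j \<longrightarrow>
        restrict y ?D (leaf_idx \<beta>) = (FF ^^ (CC + kk - (length \<beta> - 2))) x (hd \<beta>)"
    using Q leaf_in_dep by fastforce
  have "chain n Dep S [j]" using chain_single j S_sub by auto
  from conjunct2[OF xunfold_eval[OF Cb j zl this, of "Suc n"]]
  have B: "xunfold (Suc n) S Dep Fc (restrict y ?D) [j] = (FF ^^ (CC + kk + 2 - length [j])) x (hd [j])"
    by (simp add: restrict_def)
  have "CC + kk + 2 - length [j] = Suc (CC + kk)" by simp
  with B have B': "xunfold (Suc n) S Dep Fc (restrict y ?D) [j] = (FF ^^ Suc (CC + kk)) x j" by (simp only: list.sel)
  show ?thesis using A B' by (rule trans)
qed

lemma part1: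
  "exp_map n S Dep Fc ((exp_map n S Dep Fc ^^ k) (exp_init n S Dep Fc x)) (Inl j)
        = FF ((FF ^^ (CC + k)) x) j" if j: "j \<in> S"
proof -
  let ?E = "exp_map n S Dep Fc"
  define z where "z k = (?E ^^ k) (exp_init n S Dep Fc x)" for k
  have Q: "\<forall>q\<in>exp_index n Dep S. z k q = (case q of Inl j \<Rightarrow> (FF ^^ (CC + k)) x j
        | Inr (\<beta>, l) \<Rightarrow> (FF ^^ (CC + k - l)) x (hd \<beta>))" for k
  proof (induction k)
    case 0
    show ?case unfolding z_def exp_init_def Let_def by (auto split: sum.split)
  next
    case (Suc k)
    have zS: "z (Suc k) = ?E (z k)" unfolding z_def by simp
    show ?case
    proof
      fix q assume q: "q \<in> exp_index n Dep S"
      show "z (Suc k) q = (case q of Inl j \<Rightarrow> (FF ^^ (CC + Suc k)) x j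
        | Inr (\<beta>, l) \<Rightarrow> (FF ^^ (CC + Suc k - l)) x (hd \<beta>))"
      proof (cases q)
        case (Inl j)
        have jS: "j \<in> S" using q Inl exp_index_Inl by simp
        have "\<forall>\<beta>\<in>branches n Dep S. last \<beta> = j \<longrightarrow>
          z k (leaf_idx \<beta>) = (FF ^^ (CC + k - (length \<beta> - 2))) x (hd \<beta>)"
        proof (intro ballI impI)
          fix \<beta> assume b: "\<beta> \<in> branches n Dep S" and "last \<beta> = j"
          have li: "leaf_idx \<beta> \<in> exp_index n Dep S" using leaf_in_index[OF b] .
          have l2: "2 \<le> length \<beta>" using branch_props(1)[OF b] .
          show "z k (leaf_idx \<beta>) = (FF ^^ (CC + k - (length \<beta> - 2))) x (hd \<beta>)"
          proof (cases "length \<beta> = 2")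
            case True
            thus ?thesis using bspec[OF Suc.IH li] by (simp add: leaf_idx_def)
          next
            case False
            thus ?thesis using bspec[OF Suc.IH li] by (simp add: leaf_idx_def)
          qed
        qed
        from part1_step[OF jS this] show ?thesis using zS Inl by simp
      next
        case (Inr p)
        then obtain \<beta> l where p: "q = Inr (\<beta>, l)" by (cases p) auto
        have bl: "\<beta> \<in> branches n Dep S" "1 \<le> l" "l \<le> length \<beta> - 2" using q p exp_index_Inr by auto
        have Cl: "l \<le> CC" using bl(3) bspec[OF Cb bl(1)] by simp
        have "z (Suc k) q = exp_comp n S Dep Fc q (restrict (z k) (exp_dep n Dep S q))"
          using zS E_apply[OF q] by simp
        also have "\<dots> = (FF ^^ (CC + Suc k - l)) x (hd \<beta>)"
        proof (cases "l = 1")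
          case True
          have "Inl (hd \<beta>) \<in> exp_index n Dep S" using branch_props(3)[OF bl(1)] exp_index_Inl by simp
          from bspec[OF Suc.IH this] have A: "z k (Inl (hd \<beta>)) = (FF ^^ (CC + k)) x (hd \<beta>)"
            by (simp only: sum.case)
          have B: "exp_comp n S Dep Fc q (restrict (z k) (exp_dep n Dep S q)) = z k (Inl (hd \<beta>))"
            unfolding p exp_comp_def exp_dep_def using True by simp
          have e1: "CC + Suc k - l = CC + k" using True by simp
          show ?thesis unfolding e1 using B A by (rule trans)
        next
          case False
          have "1 \<le> l - 1" using bl(2) False by linarith
          moreover have "l - 1 \<le> length \<beta> - 2" using bl(3) by linarith
          ultimately have "Inr (\<beta>, l - 1) \<in> exp_index n Dep S" using bl(1) exp_index_Inr by simp
          from bspec[OF Suc.IH this] have A: "z k (Inr (\<beta>, l - 1)) = (FF ^^ (CC + k - (l - 1))) x (hd \<beta>)"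
            by (simp only: sum.case prod.case)
          have B: "exp_comp n S Dep Fc q (restrict (z k) (exp_dep n Dep S q)) = z k (Inr (\<beta>, l - 1))"
            unfolding p exp_comp_def exp_dep_def using False by simp
          have e1: "CC + Suc k - l = CC + k - (l - 1)" using bl(2) by simp
          show ?thesis unfolding e1 using B A by (rule trans)
        qed
        finally show ?thesis using p by (simp only: sum.case prod.case)
      qed
    qed
  qed
  have "\<forall>\<beta>\<in>branches n Dep S. last \<beta> = j \<longrightarrow>
      z k (leaf_idx \<beta>) = (FF ^^ (CC + k - (length \<beta> - 2))) x (hd \<beta>)"
  proof (intro ballI impI)
    fix \<beta> assume b: "\<beta> \<in> branches n Dep S" and "last \<beta> = j"
    have li: "leaf_idx \<beta> \<in> exp_index n Dep S" using leaf_in_index[OF b] .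
    show "z k (leaf_idx \<beta>) = (FF ^^ (CC + k - (length \<beta> - 2))) x (hd \<beta>)"
      using bspec[OF Q li] by (simp add: leaf_idx_def)
  qed
  from part1_step[OF j this] have "?E (z k) (Inl j) = (FF ^^ Suc (CC + k)) x j" .
  moreover have "(FF ^^ Suc (CC + k)) x = FF ((FF ^^ (CC + k)) x)" by (simp only: funpow.simps o_def)
  ultimately show ?thesis unfolding z_def by simp
qed

lemma Wt_nonneg: assumes "set \<beta> \<subseteq> {1..n}" "m < length \<beta>" shows "0 \<le> Wt Lam \<beta> m"
  unfolding Wt_def
proof (rule prod_nonneg)
  fix i assume "i \<in> {..<m}"
  hence i: "i < length \<beta>" "Suc i < length \<beta>" using assms by auto
  have "\<beta> ! i \<in> {1..n}" "\<beta> ! Suc i \<in> {1..n}" using nth_mem[OF i(1)] nth_mem[OF i(2)] assms(1) by blast+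
  thus "0 \<le> Lam (\<beta> ! i) (\<beta> ! Suc i)" using Lam_nonneg by blast
qed

lemma wgt_nonneg: assumes b: "\<beta> \<in> branches n Dep S" shows "0 \<le> wgt Lam \<beta>"
proof -
  have "2 \<le> length \<beta>" "set \<beta> \<subseteq> {1..n}" using branch_props(1,2)[OF b] by auto
  thus ?thesis unfolding wgt_def by (intro Wt_nonneg) auto
qed

lemma Lt_leaf: assumes b: "\<beta> \<in> branches n Dep S"
  shows "Lt n Dep S Lam (leaf_idx \<beta>) (Inl (last \<beta>)) = wgt Lam \<beta>"
proof -
  have "{\<beta>' \<in> branches n Dep S. last \<beta>' = last \<beta> \<and> leaf_idx \<beta>' = leaf_idx \<beta>} = {\<beta>}"
    using b leaf_inj branch_props(1) by blast
  thus ?thesis unfolding Lt_def by simp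
qed

lemma Br_single: "Br n Dep S [j] = {\<beta> \<in> branches n Dep S. last \<beta> = j}"
proof -
  have "(\<exists>s. s \<noteq> [] \<and> \<beta> = s @ [j]) \<longleftrightarrow> last \<beta> = j" if "2 \<le> length \<beta>" for \<beta>
  proof
    assume "last \<beta> = j"
    hence "\<beta> = butlast \<beta> @ [j]" using that by (metis append_butlast_last_id list.size(3) not_numeral_le_zero)
    moreover have "butlast \<beta> \<noteq> []" using that by (cases \<beta>) auto
    ultimately show "\<exists>s. s \<noteq> [] \<and> \<beta> = s @ [j]" by blast
  qed auto
  thus ?thesis unfolding Br_def using branch_props(1) by blast
qed

lemma exp_dep_Inl: "exp_dep n Dep S (Inl j) = leaf_idx ` Br n Dep S [j]"
  unfolding Br_single exp_dep_def by auto

lemma xunfold_lip: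
  assumes j: "j \<in> S"
    and zin: "\<forall>\<beta>\<in>branches n Dep S. last \<beta> = j \<longrightarrow> z (leaf_idx \<beta>) \<in> X (hd \<beta>) \<and> z' (leaf_idx \<beta>) \<in> X (hd \<beta>)"
  shows "chain n Dep S t \<Longrightarrow> last t = j \<Longrightarrow> length t + f = n + 2 \<Longrightarrow>
     xunfold f S Dep Fc z t \<in> X (hd t) \<and> xunfold f S Dep Fc z' t \<in> X (hd t) \<and>
     dist (xunfold f S Dep Fc z t) (xunfold f S Dep Fc z' t) \<le>
       (\<Sum>\<beta>\<in>Br n Dep S t. Wt Lam \<beta> (length \<beta> - length t) * dist (z (leaf_idx \<beta>)) (z' (leaf_idx \<beta>)))"
proof (induction f arbitrary: t)
  case 0
  thus ?case using chain_len[OF 0(1)] 0(3) by simp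
next
  case (Suc f)
  let ?h = "hd t"
  let ?d = "\<lambda>\<beta>. dist (z (leaf_idx \<beta>)) (z' (leaf_idx \<beta>))"
  have c: "chain n Dep S t" and lt: "last t = j" using Suc.prems by auto
  have tne: "t \<noteq> []" using c unfolding chain_def by auto
  have hin: "?h \<in> {1..n}" using chain_hd[OF c] .
  have fD: "finite (Dep ?h)" using Dep_sub[OF hin] finite_subset by blast
  define A where "A w = (\<lambda>k\<in>Dep ?h. if k \<in> S then w (leaf_idx (k # t)) else xunfold f S Dep Fc w (k # t))" for w
  have xu: "xunfold (Suc f) S Dep Fc w t = Fc ?h (A w)" for w unfolding A_def by (simp add: xunfold.simps)
  have brk: "k # t \<in> branches n Dep S" "last (k # t) = j" if "k \<in> Dep ?h" "k \<in> S" for k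
    using chain_branch[OF c _ that] lt j tne by auto
  have IHk: "xunfold f S Dep Fc z (k # t) \<in> X k \<and> xunfold f S Dep Fc z' (k # t) \<in> X k \<and>
     dist (xunfold f S Dep Fc z (k # t)) (xunfold f S Dep Fc z' (k # t)) \<le>
       (\<Sum>\<beta>\<in>Br n Dep S (k # t). Wt Lam \<beta> (length \<beta> - length (k # t)) * ?d \<beta>)"
    if "k \<in> Dep ?h" "k \<notin> S" for k
  proof -
    have "chain n Dep S (k # t)" using chain_cons[OF c that] .
    moreover have "last (k # t) = j" using lt tne by simp
    moreover have "length (k # t) + f = n + 2" using Suc.prems by simp
    ultimately show ?thesis using Suc.IH[of "k # t"] by (simp only: list.sel(1))
  qed
  have Ain: "A z \<in> PiE (Dep ?h) X" "A z' \<in> PiE (Dep ?h) X"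
  proof -
    have "A w k \<in> X k" if w: "w = z \<or> w = z'" and k: "k \<in> Dep ?h" for w k
    proof (cases "k \<in> S")
      case True
      from bspec[OF zin brk(1)[OF k True]] brk(2)[OF k True] have "w (leaf_idx (k # t)) \<in> X k" using w by auto
      thus ?thesis using k True unfolding A_def by simp
    next
      case False
      thus ?thesis using IHk[OF k False] k w unfolding A_def by auto
    qed
    thus "A z \<in> PiE (Dep ?h) X" "A z' \<in> PiE (Dep ?h) X" unfolding A_def PiE_iff by auto
  qed
  have mem: "xunfold (Suc f) S Dep Fc z t \<in> X ?h" "xunfold (Suc f) S Dep Fc z' t \<in> X ?h"
    unfolding xu using Fc_in[OF hin] Ain by auto
  have Lk: "0 \<le> Lam k ?h" if "k \<in> Dep ?h" for k using Lam_nonneg Dep_sub[OF hin] hin that by blast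
  have "dist (xunfold (Suc f) S Dep Fc z t) (xunfold (Suc f) S Dep Fc z' t) \<le>
      (\<Sum>k\<in>Dep ?h. Lam k ?h * dist (A z k) (A z' k))"
    unfolding xu using Fc_lip[OF hin Ain] .
  also have "\<dots> = (\<Sum>k\<in>Dep ?h \<inter> S. Lam k ?h * dist (A z k) (A z' k)) + (\<Sum>k\<in>Dep ?h - S. Lam k ?h * dist (A z k) (A z' k))"
    using fD by (metis (no_types, lifting) Diff_disjoint Int_Diff_Un Int_Diff_disjoint Int_commute finite_Int finite_Diff sum.union_disjoint)
  also have "\<dots> \<le> (\<Sum>k\<in>Dep ?h \<inter> S. Wt Lam (k # t) (length (k # t) - length t) * ?d (k # t)) +
      (\<Sum>k\<in>Dep ?h - S. \<Sum>\<beta>\<in>Br n Dep S (k # t). Wt Lam \<beta> (length \<beta> - length t) * ?d \<beta>)"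
  proof (rule add_mono)
    show "(\<Sum>k\<in>Dep ?h \<inter> S. Lam k ?h * dist (A z k) (A z' k)) \<le> (\<Sum>k\<in>Dep ?h \<inter> S. Wt Lam (k # t) (length (k # t) - length t) * ?d (k # t))"
      by (rule sum_mono) (use tne in \<open>simp add: A_def Wt_one\<close>)
    show "(\<Sum>k\<in>Dep ?h - S. Lam k ?h * dist (A z k) (A z' k)) \<le> (\<Sum>k\<in>Dep ?h - S. \<Sum>\<beta>\<in>Br n Dep S (k # t). Wt Lam \<beta> (length \<beta> - length t) * ?d \<beta>)"
    proof (rule sum_mono)
      fix k assume k: "k \<in> Dep ?h - S"
      have "Lam k ?h * dist (A z k) (A z' k) \<le> Lam k ?h * (\<Sum>\<beta>\<in>Br n Dep S (k # t). Wt Lam \<beta> (length \<beta> - length (k # t)) * ?d \<beta>)"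
        using IHk[of k] k Lk[of k] unfolding A_def by (auto intro: mult_left_mono)
      also have "\<dots> = (\<Sum>\<beta>\<in>Br n Dep S (k # t). Wt Lam \<beta> (length \<beta> - length t) * ?d \<beta>)"
        unfolding sum_distrib_left
      proof (rule sum.cong[OF refl])
        fix \<beta> assume "\<beta> \<in> Br n Dep S (k # t)"
        then obtain s where s: "s \<noteq> []" "\<beta> = s @ k # t" unfolding Br_def by auto
        have "length \<beta> - length t = Suc (length s)" "length \<beta> - length (k # t) = length s" using s by auto
        thus "Lam k ?h * (Wt Lam \<beta> (length \<beta> - length (k # t)) * ?d \<beta>) = Wt Lam \<beta> (length \<beta> - length t) * ?d \<beta>"
          using Wt_step[OF s(2) tne] by simp
      qed
      finally show "Lam k ?h * dist (A z k) (A z' k) \<le> (\<Sum>\<beta>\<in>Br n Dep S (k # t). Wt Lam \<beta> (length \<beta> - length t) * ?d \<beta>)" .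
    qed
  qed
  also have "\<dots> = (\<Sum>\<beta>\<in>Br n Dep S t. Wt Lam \<beta> (length \<beta> - length t) * ?d \<beta>)"
    using Br_sum[OF c, of "\<lambda>\<beta>. Wt Lam \<beta> (length \<beta> - length t) * ?d \<beta>"] lt j by simp
  finally show ?case using mem by simp
qed

lemma exp_spaces_leaf: "exp_spaces X (leaf_idx \<beta>) = X (hd \<beta>)"
  unfolding leaf_idx_def exp_spaces_def by auto

lemma leaf_inj_on: "inj_on leaf_idx (Br n Dep S [j])"
proof (rule inj_onI)
  fix a b assume a: "a \<in> Br n Dep S [j]" and b: "b \<in> Br n Dep S [j]" and e: "leaf_idx a = leaf_idx b"
  have "a \<in> branches n Dep S" "last a = j" "b \<in> branches n Dep S" "last b = j" using a b unfolding Br_single by auto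
  thus "a = b" using leaf_inj[OF branch_props(1) branch_props(1) _ e] by simp
qed

lemma part2_lip: "lipschitz_consts (exp_index n Dep S) (exp_spaces X) (exp_dep n Dep S) (exp_comp n S Dep Fc) (Lt n Dep S Lam)"
  unfolding lipschitz_consts_def
proof (rule conjI; intro ballI)
  fix p q assume p: "p \<in> exp_index n Dep S" and q: "q \<in> exp_index n Dep S"
  show "0 \<le> Lt n Dep S Lam p q \<and> (p \<notin> exp_dep n Dep S q \<longrightarrow> Lt n Dep S Lam p q = 0)"
  proof (cases q)
    case (Inl j)
    have "0 \<le> Lt n Dep S Lam p q" unfolding Inl Lt_def sum.case
      by (rule sum_nonneg) (use wgt_nonneg in blast)
    moreover have "Lt n Dep S Lam p q = 0" if "p \<notin> exp_dep n Dep S q"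
    proof -
      have E: "{\<beta> \<in> branches n Dep S. last \<beta> = j \<and> leaf_idx \<beta> = p} = {}"
      proof (rule equals0I)
        fix \<beta> assume "\<beta> \<in> {\<beta> \<in> branches n Dep S. last \<beta> = j \<and> leaf_idx \<beta> = p}"
        hence "\<beta> \<in> branches n Dep S" "last \<beta> = j" "leaf_idx \<beta> = p" by auto
        hence "p \<in> exp_dep n Dep S q" using leaf_in_dep Inl by metis
        thus False using that by simp
      qed
      show ?thesis unfolding Inl Lt_def sum.case E by simp
    qed
    ultimately show ?thesis by blast
  next
    case (Inr r)
    thus ?thesis unfolding Lt_def by simp
  qed
next
  fix q x y assume q: "q \<in> exp_index n Dep S" and x: "x \<in> PiE (exp_dep n Dep S q) (exp_spaces X)"
    and y: "y \<in> PiE (exp_dep n Dep S q) (exp_spaces X)"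
  show "dist (exp_comp n S Dep Fc q x) (exp_comp n S Dep Fc q y)
      \<le> (\<Sum>i\<in>exp_dep n Dep S q. Lt n Dep S Lam i q * dist (x i) (y i))"
  proof (cases q)
    case (Inl j)
    have j: "j \<in> S" using q Inl exp_index_Inl by simp
    have zin: "\<forall>\<beta>\<in>branches n Dep S. last \<beta> = j \<longrightarrow> x (leaf_idx \<beta>) \<in> X (hd \<beta>) \<and> y (leaf_idx \<beta>) \<in> X (hd \<beta>)"
    proof (intro ballI impI)
      fix \<beta> assume b: "\<beta> \<in> branches n Dep S" "last \<beta> = j"
      have "leaf_idx \<beta> \<in> exp_dep n Dep S q" using leaf_in_dep[OF b(1)] b(2) Inl by simp
      thus "x (leaf_idx \<beta>) \<in> X (hd \<beta>) \<and> y (leaf_idx \<beta>) \<in> X (hd \<beta>)"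
        using x y exp_spaces_leaf[of \<beta>] by (auto simp: PiE_iff)
    qed
    have "chain n Dep S [j]" using chain_single j S_sub by auto
    from conjunct2[OF conjunct2[OF xunfold_lip[OF j zin this, of "Suc n"]]]
    have "dist (xunfold (Suc n) S Dep Fc x [j]) (xunfold (Suc n) S Dep Fc y [j]) \<le>
       (\<Sum>\<beta>\<in>Br n Dep S [j]. Wt Lam \<beta> (length \<beta> - length [j]) * dist (x (leaf_idx \<beta>)) (y (leaf_idx \<beta>)))"
      by simp
    also have "\<dots> = (\<Sum>\<beta>\<in>Br n Dep S [j]. Lt n Dep S Lam (leaf_idx \<beta>) q * dist (x (leaf_idx \<beta>)) (y (leaf_idx \<beta>)))"
    proof (rule sum.cong[OF refl])
      fix \<beta> assume "\<beta> \<in> Br n Dep S [j]"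
      hence b: "\<beta> \<in> branches n Dep S" "last \<beta> = j" unfolding Br_single by auto
      show "Wt Lam \<beta> (length \<beta> - length [j]) * dist (x (leaf_idx \<beta>)) (y (leaf_idx \<beta>)) =
        Lt n Dep S Lam (leaf_idx \<beta>) q * dist (x (leaf_idx \<beta>)) (y (leaf_idx \<beta>))"
      proof -
        have "Lt n Dep S Lam (leaf_idx \<beta>) q = wgt Lam \<beta>"
          unfolding Inl b(2)[symmetric] by (rule Lt_leaf[OF b(1)])
        thus ?thesis unfolding wgt_def by simp
      qed
    qed
    also have "\<dots> = (\<Sum>i\<in>exp_dep n Dep S q. Lt n Dep S Lam i q * dist (x i) (y i))"
      unfolding Inl exp_dep_Inl by (rule sum.reindex[OF leaf_inj_on, symmetric, unfolded o_def])
    finally have F: "dist (xunfold (Suc n) S Dep Fc x [j]) (xunfold (Suc n) S Dep Fc y [j])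
       \<le> (\<Sum>i\<in>exp_dep n Dep S q. Lt n Dep S Lam i q * dist (x i) (y i))" .
    have C: "exp_comp n S Dep Fc q w = xunfold (Suc n) S Dep Fc w [j]" for w
      unfolding Inl exp_comp_def exp_Ftilde_def by simp
    show ?thesis unfolding C by (rule F)
  next
    case (Inr r)
    then obtain \<beta> l where r: "q = Inr (\<beta>, l)" by (cases r) auto
    define a where "a = (if l = 1 then Inl (hd \<beta>) else Inr (\<beta>, l - 1))"
    have D: "exp_dep n Dep S q = {a}" unfolding a_def r exp_dep_def by simp
    have C: "exp_comp n S Dep Fc q w = w a" for w unfolding a_def r exp_comp_def by simp
    have L: "Lt n Dep S Lam a q = 1" unfolding Lt_def D[unfolded r] r by simp
    show ?thesis unfolding C D using L by simp
  qed
qed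

lemma gv_stable: "chain n Dep S t \<Longrightarrow> n + 1 \<le> length t + f \<Longrightarrow> f \<le> f' \<Longrightarrow>
    gv Dep S Lam U c f (hd t) = gv Dep S Lam U c f' (hd t)"
proof (induction f arbitrary: t f')
  case 0
  thus ?case using chain_len[OF 0(1)] by simp
next
  case (Suc f)
  obtain f'' where f': "f' = Suc f''" "f \<le> f''" using Suc.prems(3) by (cases f') auto
  have c: "chain n Dep S t" using Suc.prems by simp
  have tne: "t \<noteq> []" using c unfolding chain_def by auto
  have "(\<Sum>k\<in>Dep (hd t). complex_of_real (Lam k (hd t)) * (if k \<in> S then U k else gv Dep S Lam U c f k)) =
        (\<Sum>k\<in>Dep (hd t). complex_of_real (Lam k (hd t)) * (if k \<in> S then U k else gv Dep S Lam U c f'' k))"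
  proof (rule sum.cong[OF refl])
    fix k assume k: "k \<in> Dep (hd t)"
    show "complex_of_real (Lam k (hd t)) * (if k \<in> S then U k else gv Dep S Lam U c f k) =
        complex_of_real (Lam k (hd t)) * (if k \<in> S then U k else gv Dep S Lam U c f'' k)"
    proof (cases "k \<in> S")
      case False
      have "chain n Dep S (k # t)" using chain_cons[OF c k False] .
      moreover have "n + 1 \<le> length (k # t) + f" using Suc.prems(2) by simp
      ultimately have "gv Dep S Lam U c f (hd (k # t)) = gv Dep S Lam U c f'' (hd (k # t))"
        using Suc.IH f'(2) by blast
      thus ?thesis using False by simp
    qed simp
  qed
  thus ?case unfolding f'(1) gv.simps by simp
qed

lemma exp_dep_sub: "q \<in> exp_index n Dep S \<Longrightarrow> exp_dep n Dep S q \<subseteq> exp_index n Dep S"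
proof -
  assume q: "q \<in> exp_index n Dep S"
  show ?thesis
  proof (cases q)
    case (Inl j)
    thus ?thesis unfolding exp_dep_def using leaf_in_index by auto
  next
    case (Inr r)
    then obtain \<beta> l where r: "q = Inr (\<beta>, l)" by (cases r) auto
    have bl: "\<beta> \<in> branches n Dep S" "1 \<le> l" "l \<le> length \<beta> - 2" using q r exp_index_Inr by auto
    show ?thesis
    proof (cases "l = 1")
      case True
      thus ?thesis unfolding r exp_dep_def using branch_props(3)[OF bl(1)] exp_index_Inl by simp
    next
      case False
      have "1 \<le> l - 1" using bl(2) False by linarith
      moreover have "l - 1 \<le> length \<beta> - 2" using bl(3) by linarith
      ultimately show ?thesis unfolding r exp_dep_def using False bl(1) exp_index_Inr by simp
    qed
  qed
qed

lemma Lt_zero: "p \<in> exp_index n Dep S \<Longrightarrow> q \<in> exp_index n Dep S \<Longrightarrow> p \<notin> exp_dep n Dep S q \<Longrightarrow> Lt n Dep S Lam p q = 0"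
  using part2_lip unfolding lipschitz_consts_def by blast

lemma exp_index_finite: "finite (exp_index n Dep S)"
proof -
  have "exp_index n Dep S \<subseteq> Inl ` S \<union> (\<lambda>(\<beta>, l). Inr (\<beta>, l)) ` (branches n Dep S \<times> {..Suc n})"
    unfolding exp_index_def using branch_len by fastforce
  moreover have "finite S" using S_sub finite_subset by blast
  ultimately show ?thesis using branches_finite finite_subset by blast
qed

lemma sum_dep: assumes q: "q \<in> exp_index n Dep S"
  shows "(\<Sum>p\<in>exp_index n Dep S. complex_of_real (Lt n Dep S Lam p q) * V p)
       = (\<Sum>p\<in>exp_dep n Dep S q. complex_of_real (Lt n Dep S Lam p q) * V p)"
proof -
  note fin = exp_index_finite
  show ?thesis
    by (rule sum.mono_neutral_right[OF fin exp_dep_sub[OF q]]) (use Lt_zero q in auto)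
qed

lemma sum_Dep: assumes i: "i \<in> {1..n}"
  shows "(\<Sum>k\<in>{1..n}. complex_of_real (Lam k i) * u k) = (\<Sum>k\<in>Dep i. complex_of_real (Lam k i) * u k)"
  by (rule sum.mono_neutral_right) (use Dep_sub[OF i] Lam_zero i in auto)

lemma eig_transfer:
  assumes ev: "ev \<noteq> 0" and Vnz: "\<exists>q\<in>exp_index n Dep S. V q \<noteq> 0"
    and eq: "\<forall>q\<in>exp_index n Dep S. (\<Sum>p\<in>exp_index n Dep S. complex_of_real (Lt n Dep S Lam p q) * V p) = ev * V q"
  shows "\<exists>u. (\<exists>i\<in>{1..n}. u i \<noteq> 0) \<and> (\<forall>i\<in>{1..n}. (\<Sum>k\<in>{1..n}. complex_of_real (Lam k i) * u k) = ev * u i)"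
proof -
  define c where "c = inverse ev"
  have cev: "ev * c = 1" using ev unfolding c_def by simp
  define U where "U j = V (Inl j)" for j
  have eqd: "(\<Sum>p\<in>exp_dep n Dep S q. complex_of_real (Lt n Dep S Lam p q) * V p) = ev * V q"
    if "q \<in> exp_index n Dep S" for q using eq sum_dep that by simp
  have Vr: "V (Inr (\<beta>, l)) = c ^ l * U (hd \<beta>)" if b: "\<beta> \<in> branches n Dep S" and l: "1 \<le> l" "l \<le> length \<beta> - 2" for \<beta> l
    using l
  proof (induction l)
    case 0 thus ?case by simp
  next
    case (Suc l)
    let ?q = "Inr (\<beta>, Suc l)"
    have q: "?q \<in> exp_index n Dep S" using b Suc.prems exp_index_Inr by simp
    define a where "a = (if Suc l = 1 then Inl (hd \<beta>) else Inr (\<beta>, l))"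
    have D: "exp_dep n Dep S ?q = {a}" unfolding a_def exp_dep_def by simp
    have L: "Lt n Dep S Lam a ?q = 1" unfolding Lt_def D by simp
    have "V a = ev * V ?q" using eqd[OF q] unfolding D using L by simp
    hence Vq: "V ?q = c * V a" using ev unfolding c_def by (simp add: field_simps)
    show ?case
    proof (cases "l = 0")
      case True thus ?thesis using Vq unfolding a_def U_def by simp
    next
      case False
      hence "V (Inr (\<beta>, l)) = c ^ l * U (hd \<beta>)" using Suc by simp
      thus ?thesis using Vq False unfolding a_def by simp
    qed
  qed
  have Vleaf: "V (leaf_idx \<beta>) = c ^ (length \<beta> - 2) * U (hd \<beta>)" if b: "\<beta> \<in> branches n Dep S" for \<beta>
  proof (cases "length \<beta> = 2")
    case True thus ?thesis unfolding leaf_idx_def U_def by simp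
  next
    case False
    hence "1 \<le> length \<beta> - 2" using branch_props(1)[OF b] by linarith
    thus ?thesis using Vr[OF b] False unfolding leaf_idx_def by simp
  qed
  have eqS: "ev * U j = (\<Sum>\<beta>\<in>Br n Dep S [j]. complex_of_real (wgt Lam \<beta>) * (c ^ (length \<beta> - 2) * U (hd \<beta>)))"
    if j: "j \<in> S" for j
  proof -
    have q: "Inl j \<in> exp_index n Dep S" using j exp_index_Inl by simp
    have "ev * U j = (\<Sum>p\<in>exp_dep n Dep S (Inl j). complex_of_real (Lt n Dep S Lam p (Inl j)) * V p)"
      using eqd[OF q] unfolding U_def by simp
    also have "\<dots> = (\<Sum>\<beta>\<in>Br n Dep S [j]. complex_of_real (Lt n Dep S Lam (leaf_idx \<beta>) (Inl j)) * V (leaf_idx \<beta>))"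
      unfolding exp_dep_Inl by (rule sum.reindex[OF leaf_inj_on, unfolded o_def])
    also have "\<dots> = (\<Sum>\<beta>\<in>Br n Dep S [j]. complex_of_real (wgt Lam \<beta>) * (c ^ (length \<beta> - 2) * U (hd \<beta>)))"
    proof (rule sum.cong[OF refl])
      fix \<beta> assume "\<beta> \<in> Br n Dep S [j]"
      hence b: "\<beta> \<in> branches n Dep S" "last \<beta> = j" unfolding Br_single by auto
      have "Lt n Dep S Lam (leaf_idx \<beta>) (Inl j) = wgt Lam \<beta>"
        unfolding b(2)[symmetric] by (rule Lt_leaf[OF b(1)])
      thus "complex_of_real (Lt n Dep S Lam (leaf_idx \<beta>) (Inl j)) * V (leaf_idx \<beta>) =
         complex_of_real (wgt Lam \<beta>) * (c ^ (length \<beta> - 2) * U (hd \<beta>))" using Vleaf[OF b(1)] by simp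
    qed
    finally show ?thesis .
  qed
  define u where "u i = (if i \<in> S then U i else gv Dep S Lam U c n i)" for i
  have uns: "u i = c * (\<Sum>k\<in>Dep i. complex_of_real (Lam k i) * u k)" if i: "i \<in> {1..n}" "i \<notin> S" for i
  proof -
    have "gv Dep S Lam U c n (hd [i]) = gv Dep S Lam U c (Suc n) (hd [i])"
      by (rule gv_stable[OF chain_single[OF i(1)]]) auto
    hence "u i = gv Dep S Lam U c (Suc n) i" using i unfolding u_def by simp
    also have "\<dots> = c * (\<Sum>k\<in>Dep i. complex_of_real (Lam k i) * (if k \<in> S then U k else gv Dep S Lam U c n k))"
      by (rule gv.simps(2))
    also have "(\<Sum>k\<in>Dep i. complex_of_real (Lam k i) * (if k \<in> S then U k else gv Dep S Lam U c n k))
        = (\<Sum>k\<in>Dep i. complex_of_real (Lam k i) * u k)"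
      by (rule sum.cong[OF refl]) (simp add: u_def)
    finally show ?thesis .
  qed
  have g: "\<forall>t. chain n Dep S t \<longrightarrow> last t \<in> S \<longrightarrow> length t + f = n + 2 \<longrightarrow>
    (\<Sum>k\<in>Dep (hd t). complex_of_real (Lam k (hd t)) * u k) =
    (\<Sum>\<beta>\<in>Br n Dep S t. complex_of_real (Wt Lam \<beta> (length \<beta> - length t)) * (c ^ (length \<beta> - length t - 1) * U (hd \<beta>)))" for f
  proof (induction f)
    case 0 show ?case
    proof (intro allI impI)
      fix t assume "chain n Dep S t" "last t \<in> S" "length t + 0 = n + 2"
      with chain_len[of t] have False by simp
      thus "(\<Sum>k\<in>Dep (hd t). complex_of_real (Lam k (hd t)) * u k) =
        (\<Sum>\<beta>\<in>Br n Dep S t. complex_of_real (Wt Lam \<beta> (length \<beta> - length t)) * (c ^ (length \<beta> - length t - 1) * U (hd \<beta>)))" ..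
    qed
  next
    case (Suc f)
    show ?case
    proof (intro allI impI)
      fix t assume c: "chain n Dep S t" and lt: "last t \<in> S" and len: "length t + Suc f = n + 2"
      let ?h = "hd t"
      let ?g = "\<lambda>\<beta>. complex_of_real (Wt Lam \<beta> (length \<beta> - length t)) * (c ^ (length \<beta> - length t - 1) * U (hd \<beta>))"
      have tne: "t \<noteq> []" using c unfolding chain_def by auto
      have hin: "?h \<in> {1..n}" using chain_hd[OF c] .
      have fD: "finite (Dep ?h)" using Dep_sub[OF hin] finite_subset by blast
      have "(\<Sum>k\<in>Dep ?h. complex_of_real (Lam k ?h) * u k) =
         (\<Sum>k\<in>Dep ?h \<inter> S. complex_of_real (Lam k ?h) * u k) + (\<Sum>k\<in>Dep ?h - S. complex_of_real (Lam k ?h) * u k)"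
        using fD by (metis (no_types, lifting) Diff_disjoint Int_Diff_Un Int_Diff_disjoint Int_commute finite_Int finite_Diff sum.union_disjoint)
      also have "(\<Sum>k\<in>Dep ?h \<inter> S. complex_of_real (Lam k ?h) * u k) = (\<Sum>k\<in>Dep ?h \<inter> S. ?g (k # t))"
      proof (rule sum.cong[OF refl])
        fix k assume "k \<in> Dep ?h \<inter> S"
        thus "complex_of_real (Lam k ?h) * u k = ?g (k # t)" using Wt_one[OF tne] unfolding u_def by simp
      qed
      also have "(\<Sum>k\<in>Dep ?h - S. complex_of_real (Lam k ?h) * u k) = (\<Sum>k\<in>Dep ?h - S. \<Sum>\<beta>\<in>Br n Dep S (k # t). ?g \<beta>)"
      proof (rule sum.cong[OF refl])
        fix k assume k: "k \<in> Dep ?h - S"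
        have kin: "k \<in> {1..n}" using k Dep_sub[OF hin] by auto
        have ck: "chain n Dep S (k # t)" using chain_cons[OF c] k by auto
        have IH: "(\<Sum>k'\<in>Dep k. complex_of_real (Lam k' k) * u k') =
          (\<Sum>\<beta>\<in>Br n Dep S (k # t). complex_of_real (Wt Lam \<beta> (length \<beta> - length (k # t))) * (c ^ (length \<beta> - length (k # t) - 1) * U (hd \<beta>)))"
        proof -
          have a1: "last (k # t) \<in> S" using lt tne by simp
          have a2: "length (k # t) + f = n + 2" using len by simp
          from Suc.IH[rule_format, OF ck a1 a2] show ?thesis by (simp only: list.sel(1))
        qed
        have "complex_of_real (Lam k ?h) * u k = complex_of_real (Lam k ?h) * c * (\<Sum>k'\<in>Dep k. complex_of_real (Lam k' k) * u k')"
          using uns[OF kin] k by simp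
        also have "\<dots> = (\<Sum>\<beta>\<in>Br n Dep S (k # t). complex_of_real (Lam k ?h) * c *
            (complex_of_real (Wt Lam \<beta> (length \<beta> - length (k # t))) * (c ^ (length \<beta> - length (k # t) - 1) * U (hd \<beta>))))"
          unfolding IH sum_distrib_left ..
        also have "\<dots> = (\<Sum>\<beta>\<in>Br n Dep S (k # t). ?g \<beta>)"
        proof (rule sum.cong[OF refl])
          fix \<beta> assume "\<beta> \<in> Br n Dep S (k # t)"
          then obtain s where s: "s \<noteq> []" "\<beta> = s @ k # t" unfolding Br_def by auto
          have l1: "length \<beta> - length t = Suc (length s)" "length \<beta> - length (k # t) = length s" using s by auto
          have l2: "length s = Suc (length s - 1)" using s(1) by (cases s) auto
          have W: "Wt Lam \<beta> (Suc (length s)) = Wt Lam \<beta> (length s) * Lam k ?h" using Wt_step[OF s(2) tne] .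
          show "complex_of_real (Lam k ?h) * c *
            (complex_of_real (Wt Lam \<beta> (length \<beta> - length (k # t))) * (c ^ (length \<beta> - length (k # t) - 1) * U (hd \<beta>))) = ?g \<beta>"
          proof -
            have P: "c ^ (Suc (length s) - 1) = c * c ^ (length s - 1)" using l2 by (metis diff_Suc_1 power_Suc)
            show ?thesis unfolding l1 W P of_real_mult by (simp only: mult_ac)
          qed
        qed
        finally show "complex_of_real (Lam k ?h) * u k = (\<Sum>\<beta>\<in>Br n Dep S (k # t). ?g \<beta>)" .
      qed
      also have "(\<Sum>k\<in>Dep ?h \<inter> S. ?g (k # t)) + (\<Sum>k\<in>Dep ?h - S. \<Sum>\<beta>\<in>Br n Dep S (k # t). ?g \<beta>) =
          (\<Sum>\<beta>\<in>Br n Dep S t. ?g \<beta>)"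
        using Br_sum[OF c lt, of ?g] by simp
      finally show "(\<Sum>k\<in>Dep ?h. complex_of_real (Lam k ?h) * u k) = (\<Sum>\<beta>\<in>Br n Dep S t. ?g \<beta>)" .
    qed
  qed
  have uS: "(\<Sum>k\<in>Dep j. complex_of_real (Lam k j) * u k) = ev * u j" if j: "j \<in> S" for j
  proof -
    have "chain n Dep S [j]" using chain_single j S_sub by auto
    from g[rule_format, OF this _, of "Suc n"] j
    have "(\<Sum>k\<in>Dep j. complex_of_real (Lam k j) * u k) =
      (\<Sum>\<beta>\<in>Br n Dep S [j]. complex_of_real (Wt Lam \<beta> (length \<beta> - length [j])) * (c ^ (length \<beta> - length [j] - 1) * U (hd \<beta>)))"
      by (simp only: list.sel last.simps if_True) simp
    also have "\<dots> = (\<Sum>\<beta>\<in>Br n Dep S [j]. complex_of_real (wgt Lam \<beta>) * (c ^ (length \<beta> - 2) * U (hd \<beta>)))"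
    proof (rule sum.cong[OF refl])
      fix \<beta> assume "\<beta> \<in> Br n Dep S [j]"
      have e: "length \<beta> - length [j] - 1 = length \<beta> - 2" by simp
      show "complex_of_real (Wt Lam \<beta> (length \<beta> - length [j])) * (c ^ (length \<beta> - length [j] - 1) * U (hd \<beta>)) =
        complex_of_real (wgt Lam \<beta>) * (c ^ (length \<beta> - 2) * U (hd \<beta>))"
        unfolding e wgt_def by simp
    qed
    also have "\<dots> = ev * U j" using eqS[OF j] by simp
    finally show ?thesis using j unfolding u_def by simp
  qed
  have ueq: "(\<Sum>k\<in>{1..n}. complex_of_real (Lam k i) * u k) = ev * u i" if i: "i \<in> {1..n}" for i
  proof (cases "i \<in> S")
    case True thus ?thesis using sum_Dep[OF i, of u] uS[OF True] by (rule_tac trans) 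
  next
    case False
    have "ev * u i = (ev * c) * (\<Sum>k\<in>Dep i. complex_of_real (Lam k i) * u k)" using uns[OF i False] by (simp only: mult.assoc)
    also have "\<dots> = (\<Sum>k\<in>Dep i. complex_of_real (Lam k i) * u k)" unfolding cev by simp
    finally show ?thesis using sum_Dep[OF i, of u] by simp
  qed
  have unz: "\<exists>i\<in>{1..n}. u i \<noteq> 0"
  proof -
    obtain q where q: "q \<in> exp_index n Dep S" "V q \<noteq> 0" using Vnz by blast
    show ?thesis
    proof (cases q)
      case (Inl j)
      hence j: "j \<in> S" using q exp_index_Inl by simp
      hence "u j \<noteq> 0" using q(2) Inl unfolding u_def U_def by simp
      thus ?thesis using j S_sub by blast
    next
      case (Inr r)
      then obtain \<beta> l where r: "q = Inr (\<beta>, l)" by (cases r) auto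
      have bl: "\<beta> \<in> branches n Dep S" "1 \<le> l" "l \<le> length \<beta> - 2" using q r exp_index_Inr by auto
      have "U (hd \<beta>) \<noteq> 0" using Vr[OF bl] q(2) r by (metis mult_zero_right)
      moreover have h: "hd \<beta> \<in> S" using branch_props(3)[OF bl(1)] .
      ultimately have "u (hd \<beta>) \<noteq> 0" unfolding u_def by simp
      thus ?thesis using h S_sub by blast
    qed
  qed
  show ?thesis using unz ueq by blast
qed

end

theorem theorem8:
  fixes n :: nat
    and X :: "nat \<Rightarrow> 'a::metric_space set"
    and Dep :: "nat \<Rightarrow> nat set"
    and Fc :: "nat \<Rightarrow> (nat \<Rightarrow> 'a) \<Rightarrow> 'a"
    and Lam :: "nat \<Rightarrow> nat \<Rightarrow> real"
    and S :: "nat set"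
  assumes "interaction {1..n} X Dep Fc Lam"
    and "S \<in> st0 n Dep"
  shows
    "(\<forall>x \<in> PiE {1..n} X. \<forall>k. \<forall>j\<in>S.
        exp_map n S Dep Fc ((exp_map n S Dep Fc ^^ k) (exp_init n S Dep Fc x)) (Inl j)
        = global_map {1..n} Dep Fc ((global_map {1..n} Dep Fc ^^ (max_branch n Dep S + k)) x) j)
     \<and> (\<exists>Lt. lipschitz_consts (exp_index n Dep S) (exp_spaces X) (exp_dep n Dep S)
                (exp_comp n S Dep Fc) Lt
             \<and> spec_rad_on (exp_index n Dep S) Lt \<le> spec_rad_on {1..n} Lam)"
proof -
  interpret xsetup n X Dep Fc Lam S using assms by unfold_locales
  have P1: "\<forall>x \<in> PiE {1..n} X. \<forall>k. \<forall>j\<in>S.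
        exp_map n S Dep Fc ((exp_map n S Dep Fc ^^ k) (exp_init n S Dep Fc x)) (Inl j)
        = global_map {1..n} Dep Fc ((global_map {1..n} Dep Fc ^^ (max_branch n Dep S + k)) x) j"
    using part1 by blast
  have ne: "exp_index n Dep S \<noteq> {}" using S_ne unfolding exp_index_def by auto
  have "spec_rad_on (exp_index n Dep S) (Lt n Dep S Lam) \<le> spec_rad_on {1..n} Lam"
    by (rule sr_transfer[OF exp_index_finite ne]) (use n_pos eig_transfer in auto)
  thus ?thesis using P1 part2_lip by blast
qed

end
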